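(* Let $w \in S_n$ with Lehmer code $L(w) = (L_1,\dots,L_n)$. If there is an index $i$ with $L_i - L_{i+1} \ge 2$, then the Schubert polynomial $\mathfrak{S}_w$ is not a standard elementary monomial.
   Context: The Lehmer code of $w$ is given by $L_i = |\{j > i : w(j) < w(i)\}|$. $e^i_j$ is the elementary symmetric polynomial of degree $j$ in $x_1,\dots,x_i$; a standard elementary monomial is a product $e^1_{a_1}e^2_{a_2}\cdots$ with nonnegative integers $a_i$, finitely many nonzero. Schubert polynomials: $\mathfrak{S}_{w_0} = x_1^{n-1}\cdots x_{n-1}$ for the longest $w_0 \in S_n$, and $\partial_i\mathfrak{S}_w = \mathfrak{S}_{ws_i}$ if $\ell(ws_i)=\ell(w)-1$, $0$ otherwise, where $\partial_i f = (f-s_if)/(x_i-x_{i+1})$. *)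

theory Defs
  imports "HOL-Library.Poly_Mapping" "HOL-Combinatorics.Permutations" "HOL-Combinatorics.Transposition"
begin

text \<open>Polynomials with integer coefficients in the variables x_1, x_2, ...
  (variable x_i is indexed by the natural number i; index 0 is unused).
  A monomial is a finitely supported exponent vector.\<close>
type_synonym mpoly = "(nat \<Rightarrow>\<^sub>0 nat) \<Rightarrow>\<^sub>0 int"

definition Var :: "nat \<Rightarrow> mpoly" where
  "Var i = Poly_Mapping.single (Poly_Mapping.single i 1) 1"

definition mswap :: "nat \<Rightarrow> (nat \<Rightarrow>\<^sub>0 nat) \<Rightarrow> (nat \<Rightarrow>\<^sub>0 nat)" where
  "mswap i m = Poly_Mapping.map_key (transpose i (Suc i)) m"

definition sswap :: "nat \<Rightarrow> mpoly \<Rightarrow> mpoly" where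
  "sswap i p = (\<Sum>m\<in>Poly_Mapping.keys p. Poly_Mapping.single (mswap i m) (Poly_Mapping.lookup p m))"

definition ddiff :: "nat \<Rightarrow> mpoly \<Rightarrow> mpoly" where
  "ddiff i f = (THE q. (Var i - Var (Suc i)) * q = f - sswap i f)"

text \<open>Permutations in S_n are permutations of {1..n}.\<close>
definition perm_length :: "nat \<Rightarrow> (nat \<Rightarrow> nat) \<Rightarrow> nat" where
  "perm_length n w = card {(i, j). 1 \<le> i \<and> i < j \<and> j \<le> n \<and> w j < w i}"

definition lehmer :: "nat \<Rightarrow> (nat \<Rightarrow> nat) \<Rightarrow> nat \<Rightarrow> nat" where
  "lehmer n w i = card {j. i < j \<and> j \<le> n \<and> w j < w i}"

definition longest :: "nat \<Rightarrow> nat \<Rightarrow> nat" where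
  "longest n i = (if 1 \<le> i \<and> i \<le> n then n + 1 - i else i)"

definition schubert_family :: "nat \<Rightarrow> ((nat \<Rightarrow> nat) \<Rightarrow> mpoly) \<Rightarrow> bool" where
  "schubert_family n S \<longleftrightarrow>
     S (longest n) = (\<Prod>i\<in>{1..n}. Var i ^ (n - i)) \<and>
     (\<forall>w i. w permutes {1..n} \<longrightarrow> 1 \<le> i \<longrightarrow> i < n \<longrightarrow>
        ddiff i (S w) =
          (if perm_length n (w \<circ> transpose i (Suc i)) + 1 = perm_length n w
           then S (w \<circ> transpose i (Suc i)) else 0))"

definition schubert :: "nat \<Rightarrow> (nat \<Rightarrow> nat) \<Rightarrow> mpoly" where
  "schubert n w = (THE p. \<exists>S. schubert_family n S \<and> S w = p)"

definition elem :: "nat \<Rightarrow> nat \<Rightarrow> mpoly" where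
  "elem i j = (\<Sum>T\<in>{T. T \<subseteq> {1..i} \<and> card T = j}. \<Prod>t\<in>T. Var t)"

definition std_elem_monomial :: "mpoly \<Rightarrow> bool" where
  "std_elem_monomial p \<longleftrightarrow> (\<exists>(a :: nat \<Rightarrow> nat) k. p = (\<Prod>i\<in>{1..k}. elem i (a i)))"

end

theory Submission
  imports Defs
begin

abbreviation mon :: "(nat \<Rightarrow>\<^sub>0 nat) \<Rightarrow> mpoly" where "mon m \<equiv> Poly_Mapping.single m 1"

lemma inj_transp: "inj (transpose i (Suc i))"
  by (rule inj_transpose)

lemma lookup_mswap: "Poly_Mapping.lookup (mswap i m) k = Poly_Mapping.lookup m (transpose i (Suc i) k)"
  by (simp add: mswap_def map_key.rep_eq inj_transp)

lemma mswap_mswap[simp]: "mswap i (mswap i m) = m"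
  by (rule poly_mapping_eqI) (simp add: lookup_mswap)

lemma mswap_add: "mswap i (a + b) = mswap i a + mswap i b"
  by (rule poly_mapping_eqI) (simp add: lookup_mswap lookup_add)

lemma mswap_zero[simp]: "mswap i 0 = 0"
  by (rule poly_mapping_eqI) (simp add: lookup_mswap)

lemma mswap_single: "mswap i (Poly_Mapping.single k e) = Poly_Mapping.single (transpose i (Suc i) k) e"
  by (rule poly_mapping_eqI) (auto simp add: lookup_mswap lookup_single when_def transpose_eq_iff)

lemma mswap_eq_iff: "mswap i x = m \<longleftrightarrow> x = mswap i m"
  by auto

lemma poly_expand: "(\<Sum>m\<in>Poly_Mapping.keys p. Poly_Mapping.single m (Poly_Mapping.lookup p m)) = p"
proof (rule poly_mapping_eqI)
  fix k
  have "Poly_Mapping.lookup (\<Sum>m\<in>Poly_Mapping.keys p. Poly_Mapping.single m (Poly_Mapping.lookup p m)) k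
      = (\<Sum>m\<in>Poly_Mapping.keys p. if m = k then Poly_Mapping.lookup p m else 0)"
    by (simp add: lookup_sum lookup_single when_def)
  also have "\<dots> = Poly_Mapping.lookup p k"
    by (simp add: sum.delta' in_keys_iff)
  finally show "Poly_Mapping.lookup (\<Sum>m\<in>Poly_Mapping.keys p. Poly_Mapping.single m (Poly_Mapping.lookup p m)) k = Poly_Mapping.lookup p k" .
qed

lemma lookup_sswap: "Poly_Mapping.lookup (sswap i p) m = Poly_Mapping.lookup p (mswap i m)"
proof -
  have "Poly_Mapping.lookup (sswap i p) m = (\<Sum>x\<in>Poly_Mapping.keys p. if x = mswap i m then Poly_Mapping.lookup p x else 0)"
    unfolding sswap_def lookup_sum
    by (rule sum.cong) (auto simp: lookup_single when_def)
  also have "\<dots> = Poly_Mapping.lookup p (mswap i m)"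
    by (simp add: sum.delta in_keys_iff)
  finally show ?thesis .
qed

lemma sswap_add: "sswap i (p + q) = sswap i p + sswap i q"
  by (rule poly_mapping_eqI) (simp add: lookup_sswap lookup_add)

lemma sswap_diff: "sswap i (p - q) = sswap i p - sswap i q"
  by (rule poly_mapping_eqI) (simp add: lookup_sswap lookup_minus)

lemma sswap_uminus: "sswap i (- p) = - sswap i p"
  by (rule poly_mapping_eqI) (simp add: lookup_sswap)

lemma sswap_zero[simp]: "sswap i 0 = 0"
  by (rule poly_mapping_eqI) (simp add: lookup_sswap)

lemma sswap_sum: "sswap i (sum f A) = (\<Sum>a\<in>A. sswap i (f a))"
  by (rule poly_mapping_eqI) (simp add: lookup_sswap lookup_sum)

lemma sswap_single: "sswap i (Poly_Mapping.single m c) = Poly_Mapping.single (mswap i m) c"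
  by (rule poly_mapping_eqI) (auto simp add: lookup_sswap lookup_single when_def)

lemma sswap_sswap[simp]: "sswap i (sswap i p) = p"
  by (rule poly_mapping_eqI) (simp add: lookup_sswap)

lemma sswap_mult: "sswap i (p * q) = sswap i p * sswap i q"
proof -
  have e: "p * q = (\<Sum>a\<in>Poly_Mapping.keys p. \<Sum>b\<in>Poly_Mapping.keys q. Poly_Mapping.single a (Poly_Mapping.lookup p a) * Poly_Mapping.single b (Poly_Mapping.lookup q b))"
    by (subst (1) poly_expand[symmetric, of p], subst (1) poly_expand[symmetric, of q]) (simp add: sum_product)
  have "sswap i (p * q) = (\<Sum>a\<in>Poly_Mapping.keys p. \<Sum>b\<in>Poly_Mapping.keys q. sswap i (Poly_Mapping.single a (Poly_Mapping.lookup p a)) * sswap i (Poly_Mapping.single b (Poly_Mapping.lookup q b)))"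
    unfolding e sswap_sum by (simp add: mult_single sswap_single mswap_add)
  also have "\<dots> = sswap i p * sswap i q"
    by (subst (3) poly_expand[symmetric, of p], subst (3) poly_expand[symmetric, of q]) (simp add: sum_product sswap_sum)
  finally show ?thesis .
qed

lemma sswap_one[simp]: "sswap i 1 = 1"
  by (rule poly_mapping_eqI) (simp add: lookup_sswap lookup_one when_def mswap_eq_iff)

lemma sswap_power: "sswap i (p ^ k) = sswap i p ^ k"
  by (induction k) (simp_all add: sswap_mult)

lemma sswap_Var: "sswap i (Var k) = Var (transpose i (Suc i) k)"
  by (simp add: Var_def sswap_single mswap_single)

lemma sswap_Var1[simp]: "sswap i (Var i) = Var (Suc i)"
  by (simp add: sswap_Var)
lemma sswap_Var2[simp]: "sswap i (Var (Suc i)) = Var i"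
  by (simp add: sswap_Var)
lemma sswap_Var3: "k \<noteq> i \<Longrightarrow> k \<noteq> Suc i \<Longrightarrow> sswap i (Var k) = Var k"
  by (simp add: sswap_Var)

lemma sswap_of_int[simp]: "sswap i (of_int c) = of_int c"
  by (metis mswap_zero single_of_int sswap_single)

definition setm :: "nat \<Rightarrow> (nat \<Rightarrow>\<^sub>0 nat) \<Rightarrow> nat \<Rightarrow> nat \<Rightarrow> (nat \<Rightarrow>\<^sub>0 nat)" where
  "setm i m x y = Poly_Mapping.update i x (Poly_Mapping.update (Suc i) y m)"

lemma lookup_setm: "Poly_Mapping.lookup (setm i m x y) k =
   (if k = i then x else if k = Suc i then y else Poly_Mapping.lookup m k)"
  by (simp add: setm_def Poly_Mapping.lookup_update)

definition Dm :: "nat \<Rightarrow> (nat \<Rightarrow>\<^sub>0 nat) \<Rightarrow> mpoly" where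
  "Dm i m = (let p = Poly_Mapping.lookup m i; q = Poly_Mapping.lookup m (Suc i) in
     if q < p then (\<Sum>j<p-q. mon (setm i m (q + j) (p - Suc j)))
     else if p < q then - (\<Sum>j<q-p. mon (setm i m (p + j) (q - Suc j)))
     else 0)"

definition Dd :: "nat \<Rightarrow> mpoly \<Rightarrow> mpoly" where
  "Dd i f = (\<Sum>m\<in>Poly_Mapping.keys f. of_int (Poly_Mapping.lookup f m) * Dm i m)"

lemma mon_add: "mon (a + b) = mon a * mon b"
  by (simp add: mult_single)

lemma Var_pow: "Var k ^ e = mon (Poly_Mapping.single k e)"
proof (induction e)
  case 0 then show ?case by simp
next
  case (Suc e)
  have "Var k ^ Suc e = Var k * mon (Poly_Mapping.single k e)"
    by (simp only: power_Suc Suc)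
  also have "\<dots> = mon (Poly_Mapping.single k (Suc e))"
    by (simp add: Var_def mult_single single_add[symmetric])
  finally show ?case .
qed

lemma setm_decomp: "setm i m x y = setm i m 0 0 + Poly_Mapping.single i x + Poly_Mapping.single (Suc i) y"
  by (rule poly_mapping_eqI) (auto simp: lookup_setm lookup_add lookup_single when_def)

lemma mon_setm: "mon (setm i m x y) = mon (setm i m 0 0) * Var i ^ x * Var (Suc i) ^ y"
  by (subst setm_decomp) (simp add: mon_add Var_pow)

lemma setm_self: "setm i m (Poly_Mapping.lookup m i) (Poly_Mapping.lookup m (Suc i)) = m"
  by (rule poly_mapping_eqI) (auto simp: lookup_setm)

lemma mswap_setm: "mswap i m = setm i m (Poly_Mapping.lookup m (Suc i)) (Poly_Mapping.lookup m i)"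
  by (rule poly_mapping_eqI) (auto simp: lookup_setm lookup_mswap transpose_def)

lemma geom_aux:
  fixes a b :: mpoly
  shows "(a - b) * (\<Sum>j<d. a ^ j * b ^ (d - Suc j)) = a ^ d - b ^ d"
proof -
  have "a ^ d - b ^ d = (a - b) * (\<Sum>j<d. b ^ (d - Suc j) * a ^ j)"
    by (rule power_diff_sumr2)
  then show ?thesis by (simp add: mult.commute)
qed


lemma alg2:
  fixes U a b :: mpoly
  shows "U * (a * b) ^ q * (a ^ d - b ^ d) = U * a ^ (q + d) * b ^ q - U * a ^ q * b ^ (q + d)"
  by (simp add: power_add power_mult_distrib right_diff_distrib mult_ac)

lemma Dm_key: "(Var i - Var (Suc i)) * Dm i m = mon m - mon (mswap i m)"
proof -
  define p where "p = Poly_Mapping.lookup m i"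
  define q where "q = Poly_Mapping.lookup m (Suc i)"
  define U where "U = mon (setm i m 0 0)"
  define a where "a = Var i"
  define b where "b = Var (Suc i)"
  have mm: "mon m = U * a ^ p * b ^ q"
    using mon_setm[of i m p q] setm_self[of i m] by (simp add: p_def q_def U_def a_def b_def)
  have ms: "mon (mswap i m) = U * a ^ q * b ^ p"
    using mon_setm[of i m q p] mswap_setm[of i m] by (simp add: p_def q_def U_def a_def b_def)
  have gen: "(a - b) * (\<Sum>j<d. mon (setm i m (r + j) (r + (d - Suc j)))) = U * (a * b) ^ r * (a ^ d - b ^ d)" for r d
  proof -
    have "(\<Sum>j<d. mon (setm i m (r + j) (r + (d - Suc j)))) = (\<Sum>j<d. U * (a * b) ^ r * (a ^ j * b ^ (d - Suc j)))"
    proof (rule sum.cong)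
      fix j
      show "mon (setm i m (r + j) (r + (d - Suc j))) = U * (a * b) ^ r * (a ^ j * b ^ (d - Suc j))"
        unfolding mon_setm[of i m "r + j" "r + (d - Suc j)"] U_def[symmetric] a_def[symmetric] b_def[symmetric]
        by (simp add: power_add power_mult_distrib mult_ac)
    qed simp
    also have "\<dots> = U * (a * b) ^ r * (\<Sum>j<d. a ^ j * b ^ (d - Suc j))"
      by (simp add: sum_distrib_left)
    finally have "(a - b) * (\<Sum>j<d. mon (setm i m (r + j) (r + (d - Suc j)))) = U * (a * b) ^ r * ((a - b) * (\<Sum>j<d. a ^ j * b ^ (d - Suc j)))"
      by (simp only: mult.left_commute)
    then show ?thesis by (simp only: geom_aux)
  qed
  show ?thesis
  proof (cases "q < p")
    case True
    define d where "d = p - q"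
    have pd: "p = q + d" using True d_def by simp
    have "Dm i m = (\<Sum>j<d. mon (setm i m (q + j) (p - Suc j)))"
      unfolding Dm_def Let_def p_def[symmetric] q_def[symmetric] d_def[symmetric] using True by simp
    also have "\<dots> = (\<Sum>j<d. mon (setm i m (q + j) (q + (d - Suc j))))"
      by (rule sum.cong) (auto simp: pd)
    finally have "(a - b) * Dm i m = U * (a * b) ^ q * (a ^ d - b ^ d)"
      using gen by simp
    then show ?thesis unfolding alg2 mm ms pd by (simp add: a_def b_def)
  next
    case False
    show ?thesis
    proof (cases "p < q")
      case True
      define d where "d = q - p"
      have qd: "q = p + d" using True d_def by simp
      have "Dm i m = - (\<Sum>j<d. mon (setm i m (p + j) (q - Suc j)))"
        unfolding Dm_def Let_def p_def[symmetric] q_def[symmetric] d_def[symmetric] using True False by simp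
      also have "\<dots> = - (\<Sum>j<d. mon (setm i m (p + j) (p + (d - Suc j))))"
        by (rule arg_cong[where f=uminus], rule sum.cong) (auto simp: qd)
      finally have "(a - b) * Dm i m = - (U * (a * b) ^ p * (a ^ d - b ^ d))"
        using gen by simp
      then show ?thesis unfolding alg2 mm ms qd by (simp add: a_def b_def)
    next
      case False2: False
      then have "p = q" using False by simp
      then have "mswap i m = m" using mswap_setm[of i m] setm_self[of i m] by (simp add: p_def q_def)
      moreover have "Dm i m = 0" unfolding Dm_def Let_def using \<open>p = q\<close> by (simp add: p_def q_def)
      ultimately show ?thesis by simp
    qed
  qed
qed

lemma of_int_mon: "of_int c * mon m = Poly_Mapping.single m c"
  by (simp add: single_of_int[symmetric] mult_single del: single_of_int)

lemma Dd_key: "(Var i - Var (Suc i)) * Dd i f = f - sswap i f"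
proof -
  have "(Var i - Var (Suc i)) * Dd i f
      = (\<Sum>m\<in>Poly_Mapping.keys f. of_int (Poly_Mapping.lookup f m) * ((Var i - Var (Suc i)) * Dm i m))"
    unfolding Dd_def by (simp add: sum_distrib_left algebra_simps)
  also have "\<dots> = (\<Sum>m\<in>Poly_Mapping.keys f. Poly_Mapping.single m (Poly_Mapping.lookup f m))
       - (\<Sum>m\<in>Poly_Mapping.keys f. Poly_Mapping.single (mswap i m) (Poly_Mapping.lookup f m))"
  proof -
    have "\<And>m. of_int (Poly_Mapping.lookup f m) * ((Var i - Var (Suc i)) * Dm i m)
       = Poly_Mapping.single m (Poly_Mapping.lookup f m) - Poly_Mapping.single (mswap i m) (Poly_Mapping.lookup f m)"
      by (simp only: Dm_key right_diff_distrib of_int_mon)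
    then show ?thesis by (simp add: sum_subtractf)
  qed
  also have "\<dots> = f - sswap i f"
    by (simp add: poly_expand sswap_def)
  finally show ?thesis .
qed

lemma Var_diff_nz: "Var i - Var (Suc i) \<noteq> 0"
proof
  assume "Var i - Var (Suc i) = 0"
  then have "Var i = Var (Suc i)" by simp
  then have "Poly_Mapping.single i (1::nat) = Poly_Mapping.single (Suc i) 1"
    unfolding Var_def by (metis lookup_single_eq lookup_single_not_eq zero_neq_one)
  then have "Poly_Mapping.lookup (Poly_Mapping.single i (1::nat)) i = Poly_Mapping.lookup (Poly_Mapping.single (Suc i) 1) i"
    by simp
  then show False by (simp add: lookup_single)
qed

lemma ddiff_eq: "ddiff i f = Dd i f"
  unfolding ddiff_def
proof (rule the_equality)
  show "(Var i - Var (Suc i)) * Dd i f = f - sswap i f" by (rule Dd_key)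
next
  fix q assume "(Var i - Var (Suc i)) * q = f - sswap i f"
  then have "(Var i - Var (Suc i)) * q = (Var i - Var (Suc i)) * Dd i f" by (simp add: Dd_key)
  then show "q = Dd i f" using Var_diff_nz by simp
qed

lemma ddiff_key: "(Var i - Var (Suc i)) * ddiff i f = f - sswap i f"
  by (simp add: ddiff_eq Dd_key)

lemma sswap_ddiff: "sswap i (ddiff i f) = ddiff i f"
proof -
  have "sswap i ((Var i - Var (Suc i)) * ddiff i f) = sswap i (f - sswap i f)"
    by (simp add: ddiff_key)
  then have "(Var (Suc i) - Var i) * sswap i (ddiff i f) = sswap i f - f"
    by (simp add: sswap_mult sswap_diff)
  then have "(Var i - Var (Suc i)) * sswap i (ddiff i f) = (Var i - Var (Suc i)) * ddiff i f"
    using ddiff_key[of i f] by algebra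
  then show ?thesis using Var_diff_nz by simp
qed

lemma ddiff_ddiff: "ddiff i (ddiff i f) = 0"
proof -
  have "(Var i - Var (Suc i)) * ddiff i (ddiff i f) = (Var i - Var (Suc i)) * 0"
    by (simp add: ddiff_key sswap_ddiff)
  then show ?thesis using Var_diff_nz by (simp del: mult_zero_right)
qed

lemma mswap_comm: "Suc (Suc i) \<le> j \<Longrightarrow> mswap i (mswap j m) = mswap j (mswap i m)"
  by (rule poly_mapping_eqI) (simp add: lookup_mswap transpose_def)

lemma sswap_comm: "Suc (Suc i) \<le> j \<Longrightarrow> sswap i (sswap j f) = sswap j (sswap i f)"
  by (rule poly_mapping_eqI) (metis lookup_sswap mswap_comm)

lemma mswap_braid: "mswap i (mswap (Suc i) (mswap i m)) = mswap (Suc i) (mswap i (mswap (Suc i) m))"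
  by (rule poly_mapping_eqI) (simp add: lookup_mswap transpose_def)

lemma sswap_braid: "sswap i (sswap (Suc i) (sswap i f)) = sswap (Suc i) (sswap i (sswap (Suc i) f))"
  by (rule poly_mapping_eqI) (simp add: lookup_sswap mswap_braid)

lemma ddiff_comm:
  assumes "Suc (Suc i) \<le> j"
  shows "ddiff i (ddiff j f) = ddiff j (ddiff i f)"
proof -
  define A where "A = Var i - Var (Suc i)"
  define C where "C = Var j - Var (Suc j)"
  have sA: "sswap j A = A" using assms by (simp add: A_def sswap_diff sswap_Var3)
  have sC: "sswap i C = C" using assms by (simp add: C_def sswap_diff sswap_Var3)
  have e1: "A * ddiff i (ddiff j f) = ddiff j f - sswap i (ddiff j f)"
    by (simp add: A_def ddiff_key)
  have e2: "C * ddiff j f = f - sswap j f"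
    by (simp add: C_def ddiff_key)
  have e2s: "C * sswap i (ddiff j f) = sswap i f - sswap i (sswap j f)"
    using arg_cong[OF e2, of "sswap i"] by (simp add: sswap_mult sswap_diff sC)
  have e3: "C * ddiff j (ddiff i f) = ddiff i f - sswap j (ddiff i f)"
    by (simp add: C_def ddiff_key)
  have e4: "A * ddiff i f = f - sswap i f"
    by (simp add: A_def ddiff_key)
  have e4s: "A * sswap j (ddiff i f) = sswap j f - sswap j (sswap i f)"
    using arg_cong[OF e4, of "sswap j"] by (simp add: sswap_mult sswap_diff sA)
  have "(A * C) * ddiff i (ddiff j f) = (A * C) * ddiff j (ddiff i f)"
    using e1 e2 e2s e3 e4 e4s sswap_comm[OF assms, of f] by algebra
  moreover have "A * C \<noteq> 0" using Var_diff_nz by (simp add: A_def C_def)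
  ultimately show ?thesis by simp
qed

lemma ddiff_braid:
  "ddiff i (ddiff (Suc i) (ddiff i f)) = ddiff (Suc i) (ddiff i (ddiff (Suc i) f))"
proof -
  define a where "a = Var i"
  define b where "b = Var (Suc i)"
  define c where "c = Var (Suc (Suc i))"
  let ?s = "sswap i" and ?t = "sswap (Suc i)"
  have sa: "?s a = b" "?s b = a" "?s c = c" by (simp_all add: a_def b_def c_def sswap_Var3)
  have ta: "?t a = a" "?t b = c" "?t c = b" by (simp_all add: a_def b_def c_def sswap_Var3)
  have K: "\<And>g. (a - b) * ddiff i g = g - ?s g" by (simp add: a_def b_def ddiff_key)
  have L: "\<And>g. (b - c) * ddiff (Suc i) g = g - ?t g" by (simp add: b_def c_def ddiff_key)
  define g1 where "g1 = ddiff i f"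
  define g2 where "g2 = ddiff (Suc i) g1"
  define g3 where "g3 = ddiff i g2"
  have E1: "(a - b) * g1 = f - ?s f" by (simp add: g1_def K)
  have E1t: "(a - c) * ?t g1 = ?t f - ?t (?s f)"
    using arg_cong[OF E1, of ?t] by (simp add: sswap_mult sswap_diff ta)
  have E1st: "(b - c) * ?s (?t g1) = ?s (?t f) - ?s (?t (?s f))"
    using arg_cong[OF E1t, of ?s] by (simp add: sswap_mult sswap_diff sa)
  have E2: "(b - c) * g2 = g1 - ?t g1" by (simp add: g2_def L)
  have E2s: "(a - c) * ?s g2 = g1 - ?s (?t g1)"
    using arg_cong[OF E2, of ?s] by (simp add: sswap_mult sswap_diff sa g1_def sswap_ddiff)
  have E3: "(a - b) * g3 = g2 - ?s g2" by (simp add: g3_def K)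
  have X: "((a - b) * (a - c) * (b - c)) * g3 = f - ?s f - ?t f + ?t (?s f) + ?s (?t f) - ?s (?t (?s f))"
    using E1 E1t E1st E2 E2s E3 by algebra
  define h1 where "h1 = ddiff (Suc i) f"
  define h2 where "h2 = ddiff i h1"
  define h3 where "h3 = ddiff (Suc i) h2"
  have F1: "(b - c) * h1 = f - ?t f" by (simp add: h1_def L)
  have F1s: "(a - c) * ?s h1 = ?s f - ?s (?t f)"
    using arg_cong[OF F1, of ?s] by (simp add: sswap_mult sswap_diff sa)
  have F1ts: "(a - b) * ?t (?s h1) = ?t (?s f) - ?t (?s (?t f))"
    using arg_cong[OF F1s, of ?t] by (simp add: sswap_mult sswap_diff ta)
  have F2: "(a - b) * h2 = h1 - ?s h1" by (simp add: h2_def K)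
  have F2t: "(a - c) * ?t h2 = h1 - ?t (?s h1)"
    using arg_cong[OF F2, of ?t] by (simp add: sswap_mult sswap_diff ta h1_def sswap_ddiff)
  have F3: "(b - c) * h3 = h2 - ?t h2" by (simp add: h3_def L)
  have Y: "((a - b) * (a - c) * (b - c)) * h3 = f - ?s f - ?t f + ?t (?s f) + ?s (?t f) - ?t (?s (?t f))"
    using F1 F1s F1ts F2 F2t F3 by algebra
  have nz: "(a - b) * (a - c) * (b - c) \<noteq> 0"
  proof -
    have "a - c \<noteq> 0"
    proof
      assume "a - c = 0"
      then have "?t (a - c) = 0" by simp
      then have "a - b = 0" by (simp add: sswap_diff ta)
      then show False using Var_diff_nz by (simp add: a_def b_def)
    qed
    then show ?thesis using Var_diff_nz by (simp add: a_def b_def c_def)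
  qed
  have "((a - b) * (a - c) * (b - c)) * g3 = ((a - b) * (a - c) * (b - c)) * h3"
    using X Y sswap_braid[of i f] by simp
  then have "g3 = h3" using nz by simp
  then show ?thesis by (simp add: g1_def g2_def g3_def h1_def h2_def h3_def)
qed

abbreviation tr :: "nat \<Rightarrow> nat \<Rightarrow> nat" where "tr i \<equiv> transpose i (Suc i)"

lemma perm_comp:
  assumes "w permutes {1..n}" "1 \<le> i" "i < n"
  shows "(w \<circ> tr i) permutes {1..n}"
  using assms by (intro permutes_compose permutes_swap_id) auto

lemma perm_neq:
  assumes "w permutes {1..n}" "x \<noteq> y"
  shows "w x \<noteq> w y"
  using permutes_inj[OF assms(1)] assms(2) by (auto dest: injD)

definition invs :: "nat \<Rightarrow> (nat \<Rightarrow> nat) \<Rightarrow> (nat \<times> nat) set" where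
  "invs n w = {(i, j). 1 \<le> i \<and> i < j \<and> j \<le> n \<and> w j < w i}"

lemma invs_sub: "invs n w \<subseteq> {1..n} \<times> {1..n}"
  by (auto simp: invs_def)

lemma finite_invs: "finite (invs n w)"
  by (rule finite_subset[OF invs_sub]) auto

lemma perm_length_invs: "perm_length n w = card (invs n w)"
  by (simp add: perm_length_def invs_def)

lemma perm_length_le: "perm_length n w \<le> n * n"
proof -
  have "card (invs n w) \<le> card ({1..n} \<times> {1..n})"
    by (rule card_mono[OF _ invs_sub]) auto
  then show ?thesis by (simp add: perm_length_invs card_cartesian_product)
qed

lemma tr_mono: "p < q \<Longrightarrow> (p, q) \<noteq> (i, Suc i) \<Longrightarrow> tr i p < tr i q"
  by (auto simp: transpose_def)

lemma tr_range: "1 \<le> i \<Longrightarrow> i < n \<Longrightarrow> 1 \<le> p \<Longrightarrow> p \<le> n \<Longrightarrow> 1 \<le> tr i p \<and> tr i p \<le> n"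
  by (auto simp: transpose_def)

lemma tr_pair: "(tr i p, tr i q) \<noteq> (i, Suc i) \<longleftrightarrow> (p, q) \<noteq> (Suc i, i)"
  by (auto simp: transpose_def)

lemma perm_length_asc:
  assumes "1 \<le> i" "i < n" "w i < w (Suc i)"
  shows "perm_length n (w \<circ> tr i) = Suc (perm_length n w)"
proof -
  define psi where "psi = (\<lambda>(p::nat, q::nat). (tr i p, tr i q))"
  have inj: "inj psi" unfolding psi_def by (auto simp: inj_on_def) (metis transpose_involutory)+
  have A: "psi (p, q) \<in> invs n w" if "(p, q) \<in> invs n (w \<circ> tr i)" "(p, q) \<noteq> (i, Suc i)" for p q
  proof -
    have h: "1 \<le> p" "p < q" "q \<le> n" "w (tr i q) < w (tr i p)" using that(1) by (auto simp: invs_def)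
    have "tr i p < tr i q" by (rule tr_mono) (use h that(2) in auto)
    moreover have "1 \<le> tr i p" "tr i q \<le> n" using tr_range[OF assms(1,2)] h by auto
    ultimately show ?thesis using h by (simp add: invs_def psi_def)
  qed
  have B: "psi (p, q) \<in> invs n (w \<circ> tr i)" if "(p, q) \<in> invs n w" for p q
  proof -
    have h: "1 \<le> p" "p < q" "q \<le> n" "w q < w p" using that by (auto simp: invs_def)
    have ne: "(p, q) \<noteq> (i, Suc i)" using h assms(3) by auto
    have "tr i p < tr i q" by (rule tr_mono) (use h ne in auto)
    moreover have "1 \<le> tr i p" "tr i q \<le> n" using tr_range[OF assms(1,2)] h by auto
    ultimately show ?thesis using h by (simp add: invs_def psi_def)
  qed
  have psi_psi: "psi (psi x) = x" for x by (cases x) (simp add: psi_def)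
  have eq: "invs n (w \<circ> tr i) = insert (i, Suc i) (psi ` invs n w)"
  proof (rule set_eqI)
    fix x :: "nat \<times> nat"
    obtain p q where x: "x = (p, q)" by (cases x)
    show "x \<in> invs n (w \<circ> tr i) \<longleftrightarrow> x \<in> insert (i, Suc i) (psi ` invs n w)"
    proof
      assume a: "x \<in> invs n (w \<circ> tr i)"
      show "x \<in> insert (i, Suc i) (psi ` invs n w)"
      proof (cases "x = (i, Suc i)")
        case False
        have "psi x \<in> invs n w" using A a False x by simp
        then have "psi (psi x) \<in> psi ` invs n w" by blast
        then show ?thesis using psi_psi by simp
      qed simp
    next
      assume "x \<in> insert (i, Suc i) (psi ` invs n w)"
      then show "x \<in> invs n (w \<circ> tr i)"
      proof
        assume "x = (i, Suc i)" then show ?thesis using assms by (simp add: invs_def)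
      next
        assume "x \<in> psi ` invs n w"
        then obtain p' q' where "(p', q') \<in> invs n w" "x = psi (p', q')" by auto
        then show ?thesis using B by simp
      qed
    qed
  qed
  have nin: "(i, Suc i) \<notin> psi ` invs n w"
  proof
    assume "(i, Suc i) \<in> psi ` invs n w"
    then obtain p q where "(p, q) \<in> invs n w" "psi (p, q) = (i, Suc i)" by auto
    then have "(p, q) = (Suc i, i)" "p < q" using tr_pair[of i p q] by (auto simp: psi_def invs_def)
    then show False by simp
  qed
  have "card (invs n (w \<circ> tr i)) = Suc (card (psi ` invs n w))"
    unfolding eq using nin finite_invs by simp
  also have "card (psi ` invs n w) = card (invs n w)"
    by (rule card_image) (rule inj_on_subset[OF inj], simp)
  finally show ?thesis by (simp add: perm_length_invs comp_def)
qed

lemma comp_tr_tr[simp]: "w \<circ> tr i \<circ> tr i = w"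
  by (simp add: fun_eq_iff)

lemma perm_length_desc:
  assumes "w permutes {1..n}" "1 \<le> i" "i < n" "\<not> w i < w (Suc i)"
  shows "perm_length n w = Suc (perm_length n (w \<circ> tr i))"
proof -
  have "w (Suc i) \<noteq> w i" using perm_neq[OF assms(1)] by simp
  then have "(w \<circ> tr i) i < (w \<circ> tr i) (Suc i)" using assms(4) by simp
  from perm_length_asc[OF assms(2,3) this] show ?thesis by (simp only: comp_tr_tr)
qed

lemma invol_set: "(\<And>x. f (f x) = x) \<Longrightarrow> {j. P (f j)} = f ` {j. P j}"
proof (rule set_eqI, rule iffI)
  fix x assume inv: "\<And>x. f (f x) = x" and "x \<in> {j. P (f j)}"
  then have "f x \<in> {j. P j}" by simp
  then show "x \<in> f ` {j. P j}" using inv[of x] by (metis image_eqI)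
next
  fix x assume inv: "\<And>x. f (f x) = x" and "x \<in> f ` {j. P j}"
  then show "x \<in> {j. P (f j)}" by (auto simp: inv)
qed

lemma tr_gt: "i < j \<Longrightarrow> j \<noteq> Suc i \<Longrightarrow> tr i j = j"
  by (simp add: transpose_def)

lemma lehmer_tr_i:
  assumes "i < n" "w i < w (Suc i)"
  shows "lehmer n (w \<circ> tr i) i = Suc (lehmer n w (Suc i))"
proof -
  have "{j. i < j \<and> j \<le> n \<and> (w \<circ> tr i) j < (w \<circ> tr i) i} = insert (Suc i) {j. Suc i < j \<and> j \<le> n \<and> w j < w (Suc i)}"
  proof (rule set_eqI)
    fix j
    show "j \<in> {j. i < j \<and> j \<le> n \<and> (w \<circ> tr i) j < (w \<circ> tr i) i} \<longleftrightarrow> j \<in> insert (Suc i) {j. Suc i < j \<and> j \<le> n \<and> w j < w (Suc i)}"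
    proof (cases "j = Suc i")
      case True then show ?thesis using assms by simp
    next
      case False
      then show ?thesis using tr_gt[of i j] by auto
    qed
  qed
  then show ?thesis unfolding lehmer_def by simp
qed

lemma lehmer_tr_Suc_i:
  assumes "w i < w (Suc i)"
  shows "lehmer n (w \<circ> tr i) (Suc i) = lehmer n w i"
proof -
  have "{j. Suc i < j \<and> j \<le> n \<and> (w \<circ> tr i) j < (w \<circ> tr i) (Suc i)} = {j. i < j \<and> j \<le> n \<and> w j < w i}"
  proof (rule set_eqI)
    fix j
    show "j \<in> {j. Suc i < j \<and> j \<le> n \<and> (w \<circ> tr i) j < (w \<circ> tr i) (Suc i)} \<longleftrightarrow> j \<in> {j. i < j \<and> j \<le> n \<and> w j < w i}"
    proof (cases "j = Suc i")
      case True then show ?thesis using assms by simp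
    next
      case False
      then show ?thesis using tr_gt[of i j] by auto
    qed
  qed
  then show ?thesis unfolding lehmer_def by simp
qed

lemma lehmer_tr_other:
  assumes "Suc i \<le> n" "k \<noteq> i" "k \<noteq> Suc i"
  shows "lehmer n (w \<circ> tr i) k = lehmer n w k"
proof (cases "k < i")
  case True
  have wk: "(w \<circ> tr i) k = w k" using assms by simp
  have rng: "(k < tr i j \<and> tr i j \<le> n) \<longleftrightarrow> (k < j \<and> j \<le> n)" for j
    using True assms by (cases "j = i"; cases "j = Suc i") auto
  have "{j. k < j \<and> j \<le> n \<and> (w \<circ> tr i) j < (w \<circ> tr i) k} = {j. (\<lambda>j. k < j \<and> j \<le> n \<and> w j < w k) (tr i j)}"
    unfolding wk using rng by auto
  also have "\<dots> = tr i ` {j. k < j \<and> j \<le> n \<and> w j < w k}"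
    by (rule invol_set) simp
  finally have e: "{j. k < j \<and> j \<le> n \<and> (w \<circ> tr i) j < (w \<circ> tr i) k} = tr i ` {j. k < j \<and> j \<le> n \<and> w j < w k}" .
  have "card (tr i ` {j. k < j \<and> j \<le> n \<and> w j < w k}) = card {j. k < j \<and> j \<le> n \<and> w j < w k}"
    by (rule card_image) simp
  then show ?thesis unfolding lehmer_def e .
next
  case False
  then have "i < k" using assms by simp
  then have "{j. k < j \<and> j \<le> n \<and> (w \<circ> tr i) j < (w \<circ> tr i) k} = {j. k < j \<and> j \<le> n \<and> w j < w k}"
    using assms tr_gt[of i k] by (auto simp: tr_gt)
  then show ?thesis unfolding lehmer_def by simp
qed

lemma lehmer_big: "n < k \<Longrightarrow> lehmer n w k = 0"
  by (simp add: lehmer_def)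

lemma lehmer_zero: "w permutes {1..n} \<Longrightarrow> lehmer n w 0 = 0"
  using permutes_not_in[of w "{1..n}" 0] by (simp add: lehmer_def)

lemma dec_chain:
  fixes w :: "nat \<Rightarrow> nat"
  assumes dec: "\<And>k. a \<le> k \<Longrightarrow> k < n \<Longrightarrow> w (Suc k) < w k"
  shows "a \<le> k \<Longrightarrow> k < j \<Longrightarrow> j \<le> n \<Longrightarrow> w j < w k"
proof (induction j)
  case 0 then show ?case by simp
next
  case (Suc j)
  show ?case
  proof (cases "k = j")
    case True then show ?thesis using Suc.prems dec by simp
  next
    case False
    then have "w j < w k" using Suc by simp
    moreover have "w (Suc j) < w j" using dec Suc.prems False by simp
    ultimately show ?thesis by simp
  qed
qed

lemma lehmer_dec:
  fixes w :: "nat \<Rightarrow> nat"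
  assumes dec: "\<And>k. a \<le> k \<Longrightarrow> k < n \<Longrightarrow> w (Suc k) < w k"
  assumes "a \<le> k" "k \<le> n"
  shows "lehmer n w k = n - k"
proof -
  have "{j. k < j \<and> j \<le> n \<and> w j < w k} = {k<..n}"
    using dec_chain[of a n w k] dec assms(2) by auto
  then show ?thesis unfolding lehmer_def by simp
qed

lemma longest_inv[simp]: "longest n (longest n x) = x"
  by (cases "1 \<le> x \<and> x \<le> n") (auto simp: longest_def)

lemma longest_permutes: "longest n permutes {1..n}"
  unfolding permutes_def
proof (intro conjI allI impI)
  fix x :: nat assume "x \<notin> {1..n}" then show "longest n x = x" by (auto simp: longest_def)
next
  fix y show "\<exists>!x. longest n x = y"
    by (rule ex1I[of _ "longest n y"]) (simp, metis longest_inv)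
qed

lemma longest_no_asc: "1 \<le> j \<Longrightarrow> j < n \<Longrightarrow> \<not> longest n j < longest n (Suc j)"
  by (simp add: longest_def)

lemma no_asc_longest:
  assumes w: "w permutes {1..n}" and na: "\<And>j. 1 \<le> j \<Longrightarrow> j < n \<Longrightarrow> \<not> w j < w (Suc j)"
  shows "w = longest n"
proof -
  have dec: "w (Suc k) < w k" if "1 \<le> k" "k < n" for k
    using na[OF that] perm_neq[OF w, of "Suc k" k] by simp
  have rng: "1 \<le> w k \<and> w k \<le> n" if "1 \<le> k" "k \<le> n" for k
    using permutes_in_image[OF w, of k] that by auto
  have lo: "n + 1 - (n - t) \<le> w (n - t)" if "t < n" for t
    using that
  proof (induction t)
    case 0 then show ?case using rng[of n] by simp
  next
    case (Suc t)
    then have "n + 1 - (n - t) \<le> w (n - t)" by simp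
    moreover have "w (Suc (n - Suc t)) < w (n - Suc t)" using dec[of "n - Suc t"] Suc.prems by simp
    moreover have "Suc (n - Suc t) = n - t" using Suc.prems by simp
    ultimately show ?case by simp
  qed
  have up: "w k \<le> n + 1 - k" if "1 \<le> k" "k \<le> n" for k
    using that
  proof (induction k)
    case 0 then show ?case by simp
  next
    case (Suc k)
    show ?case
    proof (cases "k = 0")
      case True then show ?thesis using rng[of 1] Suc.prems by simp
    next
      case False
      then have "w k \<le> n + 1 - k" using Suc by simp
      moreover have "w (Suc k) < w k" using dec[of k] Suc.prems False by simp
      ultimately show ?thesis using Suc.prems by simp
    qed
  qed
  show ?thesis
  proof
    fix k
    show "w k = longest n k"
    proof (cases "1 \<le> k \<and> k \<le> n")
      case True
      have "n + 1 - k \<le> w k" using lo[of "n - k"] True by simp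
      then show ?thesis using up[of k] True by (simp add: longest_def)
    next
      case False
      then show ?thesis using permutes_not_in[OF w, of k] by (auto simp: longest_def)
    qed
  qed
qed

lemma lehmer_longest: "lehmer n (longest n) k = (if 1 \<le> k then n - k else 0)"
proof (cases "1 \<le> k \<and> k \<le> n")
  case True
  have "lehmer n (longest n) k = n - k"
    by (rule lehmer_dec[of 1]) (use True in \<open>auto simp: longest_def\<close>)
  then show ?thesis using True by simp
next
  case False
  then show ?thesis
  proof (cases "k = 0")
    case True then show ?thesis using lehmer_zero[OF longest_permutes] by simp
  next
    case False
    then show ?thesis using \<open>\<not> (1 \<le> k \<and> k \<le> n)\<close> lehmer_big[of n k] by simp
  qed
qed

definition asc :: "nat \<Rightarrow> (nat \<Rightarrow> nat) \<Rightarrow> nat \<Rightarrow> bool" where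
  "asc n w j \<longleftrightarrow> 1 \<le> j \<and> j < n \<and> w j < w (Suc j)"

function F :: "nat \<Rightarrow> (nat \<Rightarrow> nat) \<Rightarrow> mpoly" where
  "F n w = (if w permutes {1..n} then
     (if \<exists>j. asc n w j
      then ddiff (LEAST j. asc n w j) (F n (w \<circ> tr (LEAST j. asc n w j)))
      else (\<Prod>i\<in>{1..n}. Var i ^ (n - i)))
   else 0)"
  by auto
termination
proof (relation "measure (\<lambda>(n, w). n * n - perm_length n w)")
  show "wf (measure (\<lambda>(n, w). n * n - perm_length n w))" by simp
next
  fix n w
  assume "w permutes {1..n}" "\<exists>j. asc n w j"
  then have a: "asc n w (LEAST j. asc n w j)" by (metis LeastI_ex)
  define j where "j = (LEAST j. asc n w j)"
  have "perm_length n (w \<circ> tr j) = Suc (perm_length n w)"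
    using a by (intro perm_length_asc) (auto simp: asc_def j_def)
  moreover have "perm_length n (w \<circ> tr j) \<le> n * n" by (rule perm_length_le)
  ultimately show "((n, w \<circ> tr (LEAST j. asc n w j)), (n, w)) \<in> measure (\<lambda>(n, w). n * n - perm_length n w)"
    by (simp add: j_def[symmetric])
qed

declare F.simps[simp del]

lemma measure_step:
  assumes "perm_length n u = perm_length n v + k" "0 < k"
  shows "n * n - perm_length n u < n * n - perm_length n v"
  using perm_length_le[of n u] assms by simp

lemma tr_comm: "Suc j < i \<Longrightarrow> tr j \<circ> tr i = tr i \<circ> tr j"
  by (auto simp: fun_eq_iff transpose_def)

lemma tr_braid: "tr j \<circ> tr (Suc j) \<circ> tr j = tr (Suc j) \<circ> tr j \<circ> tr (Suc j)"
  by (auto simp: fun_eq_iff transpose_def)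

lemma F_Q:
  assumes "v permutes {1..n}" "asc n v i"
  shows "F n v = ddiff i (F n (v \<circ> tr i))"
  using assms
proof (induction "n * n - perm_length n v" arbitrary: v i rule: less_induct)
  case less
  have ex: "\<exists>j. asc n v j" using less.prems by blast
  define j where "j = (LEAST j. asc n v j)"
  have aj: "asc n v j" unfolding j_def by (rule LeastI_ex[OF ex])
  have ji: "j \<le> i" unfolding j_def by (rule Least_le) (rule less.prems(2))
  have Fv: "F n v = ddiff j (F n (v \<circ> tr j))"
    using less.prems(1) ex by (subst F.simps) (simp add: j_def)
  have IH: "F n u = ddiff i' (F n (u \<circ> tr i'))"
    if "u permutes {1..n}" "asc n u i'" "perm_length n u = perm_length n v + k" "0 < k" for u i' k
    using less.hyps[OF measure_step[OF that(3,4)] that(1,2)] .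
  have pv: "1 \<le> i" "i < n" "v i < v (Suc i)" using less.prems(2) by (auto simp: asc_def)
  have pj: "1 \<le> j" "j < n" "v j < v (Suc j)" using aj by (auto simp: asc_def)
  show ?case
  proof (cases "j = i")
    case True then show ?thesis using Fv by simp
  next
    case False
    then have ji': "j < i" using ji by simp
    show ?thesis
    proof (cases "Suc j < i")
      case True
      define v1 where "v1 = v \<circ> tr j"
      define u1 where "u1 = v \<circ> tr i"
      have v1p: "v1 permutes {1..n}" unfolding v1_def using perm_comp[OF less.prems(1) pj(1,2)] .
      have u1p: "u1 permutes {1..n}" unfolding u1_def using perm_comp[OF less.prems(1) pv(1,2)] .
      have v1a: "asc n v1 i" using pv True by (simp add: asc_def v1_def transpose_def)
      have u1a: "asc n u1 j" using pj True by (simp add: asc_def u1_def transpose_def)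
      have lv1: "perm_length n v1 = perm_length n v + 1"
        unfolding v1_def using perm_length_asc[OF pj] by simp
      have lu1: "perm_length n u1 = perm_length n v + 1"
        unfolding u1_def using perm_length_asc[OF pv] by simp
      have e1: "F n v1 = ddiff i (F n (v1 \<circ> tr i))" by (rule IH[OF v1p v1a lv1]) simp
      have e2: "F n u1 = ddiff j (F n (u1 \<circ> tr j))" by (rule IH[OF u1p u1a lu1]) simp
      have same: "v1 \<circ> tr i = u1 \<circ> tr j"
        unfolding v1_def u1_def using tr_comm[OF True] by (simp add: comp_assoc)
      have "F n v = ddiff j (ddiff i (F n (v1 \<circ> tr i)))" using Fv e1 by (simp add: v1_def)
      also have "\<dots> = ddiff i (ddiff j (F n (v1 \<circ> tr i)))"
        using ddiff_comm[of j i] True by simp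
      also have "\<dots> = ddiff i (F n u1)" using e2 same by simp
      finally show ?thesis by (simp add: u1_def)
    next
      case False
      then have ij: "i = Suc j" using ji' by simp
      have n2: "Suc (Suc j) \<le> n" using pv ij by simp
      have c1: "v j < v (Suc j)" and c2: "v (Suc j) < v (Suc (Suc j))" using pj pv ij by auto
      define v1 where "v1 = v \<circ> tr j"
      define v2 where "v2 = v1 \<circ> tr (Suc j)"
      define u1 where "u1 = v \<circ> tr (Suc j)"
      define u2 where "u2 = u1 \<circ> tr j"
      have v1p: "v1 permutes {1..n}" unfolding v1_def using perm_comp[OF less.prems(1) pj(1,2)] .
      have v2p: "v2 permutes {1..n}" unfolding v2_def using perm_comp[OF v1p, of "Suc j"] n2 by simp
      have u1p: "u1 permutes {1..n}" unfolding u1_def using perm_comp[OF less.prems(1), of "Suc j"] n2 by simp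
      have u2p: "u2 permutes {1..n}" unfolding u2_def using perm_comp[OF u1p pj(1,2)] .
      have v1a: "asc n v1 (Suc j)" using c1 c2 n2 by (simp add: asc_def v1_def transpose_def)
      have v2a: "asc n v2 j" using c1 c2 n2 pj by (simp add: asc_def v2_def v1_def transpose_def)
      have u1a: "asc n u1 j" using c1 c2 n2 pj by (simp add: asc_def u1_def transpose_def)
      have u2a: "asc n u2 (Suc j)" using c1 c2 n2 pj by (simp add: asc_def u2_def u1_def transpose_def)
      have lv1: "perm_length n v1 = perm_length n v + 1"
        unfolding v1_def using perm_length_asc[OF pj] by simp
      have lv2: "perm_length n v2 = perm_length n v + 2"
        unfolding v2_def using perm_length_asc[of "Suc j" n v1] v1a lv1 by (simp add: asc_def)
      have lu1: "perm_length n u1 = perm_length n v + 1"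
        unfolding u1_def using perm_length_asc[of "Suc j" n v] c2 n2 by simp
      have lu2: "perm_length n u2 = perm_length n v + 2"
        unfolding u2_def using perm_length_asc[of j n u1] u1a lu1 by (simp add: asc_def)
      have e1: "F n v1 = ddiff (Suc j) (F n v2)" unfolding v2_def by (rule IH[OF v1p v1a lv1]) simp
      have e2: "F n v2 = ddiff j (F n (v2 \<circ> tr j))" by (rule IH[OF v2p v2a lv2]) simp
      have e3: "F n u1 = ddiff j (F n u2)" unfolding u2_def by (rule IH[OF u1p u1a lu1]) simp
      have e4: "F n u2 = ddiff (Suc j) (F n (u2 \<circ> tr (Suc j)))" by (rule IH[OF u2p u2a lu2]) simp
      have same: "v2 \<circ> tr j = u2 \<circ> tr (Suc j)"
        unfolding v2_def v1_def u2_def u1_def using tr_braid[of j] by (simp add: comp_assoc)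
      have "F n v = ddiff j (ddiff (Suc j) (ddiff j (F n (v2 \<circ> tr j))))"
        using Fv e1 e2 by (simp add: v1_def)
      also have "\<dots> = ddiff (Suc j) (ddiff j (ddiff (Suc j) (F n (v2 \<circ> tr j))))"
        by (rule ddiff_braid)
      also have "\<dots> = ddiff (Suc j) (F n u1)" using e3 e4 same by simp
      finally show ?thesis by (simp add: u1_def ij)
    qed
  qed
qed

lemma F_longest: "F n (longest n) = (\<Prod>i\<in>{1..n}. Var i ^ (n - i))"
proof -
  have h: "Ex (asc n (longest n)) = False" using longest_no_asc by (auto simp: asc_def)
  have p: "(longest n permutes {1..n}) = True" using longest_permutes[of n] by simp
  show ?thesis by (subst F.simps) (simp only: p h if_True if_False)
qed

lemma F_rec:
  assumes w: "w permutes {1..n}" and i: "1 \<le> i" "i < n"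
  shows "ddiff i (F n w) = (if perm_length n (w \<circ> tr i) + 1 = perm_length n w then F n (w \<circ> tr i) else 0)"
proof (cases "w i < w (Suc i)")
  case True
  have "perm_length n (w \<circ> tr i) = Suc (perm_length n w)" by (rule perm_length_asc[OF i True])
  moreover have "ddiff i (F n w) = 0"
    using F_Q[OF w, of i] True i by (simp add: asc_def ddiff_ddiff)
  ultimately show ?thesis by simp
next
  case False
  have l: "perm_length n w = Suc (perm_length n (w \<circ> tr i))" by (rule perm_length_desc[OF w i False])
  have "w (Suc i) \<noteq> w i" using perm_neq[OF w] by simp
  then have "asc n (w \<circ> tr i) i" using False i by (simp add: asc_def)
  from F_Q[OF perm_comp[OF w i] this] have "F n (w \<circ> tr i) = ddiff i (F n w)" by simp
  then show ?thesis using l by simp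
qed

lemma F_family: "schubert_family n (F n)"
  unfolding schubert_family_def
  using F_longest F_rec by simp

lemma family_unique:
  assumes S: "schubert_family n S" and w: "w permutes {1..n}"
  shows "S w = F n w"
  using w
proof (induction "n * n - perm_length n w" arbitrary: w rule: less_induct)
  case less
  show ?case
  proof (cases "\<exists>j. asc n w j")
    case True
    then obtain j where aj: "asc n w j" by blast
    then have pj: "1 \<le> j" "j < n" "w j < w (Suc j)" by (auto simp: asc_def)
    have up: "(w \<circ> tr j) permutes {1..n}" by (rule perm_comp[OF less.prems pj(1,2)])
    have l: "perm_length n (w \<circ> tr j) = perm_length n w + 1" using perm_length_asc[OF pj] by simp
    have c: "perm_length n (w \<circ> tr j \<circ> tr j) + 1 = perm_length n (w \<circ> tr j)" using l by simp
    have "ddiff j (S (w \<circ> tr j)) = (if perm_length n (w \<circ> tr j \<circ> tr j) + 1 = perm_length n (w \<circ> tr j)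
       then S (w \<circ> tr j \<circ> tr j) else 0)"
      using S up pj unfolding schubert_family_def by blast
    then have eS: "ddiff j (S (w \<circ> tr j)) = S w" using c by (simp only: if_True comp_tr_tr) simp
    have eF: "ddiff j (F n (w \<circ> tr j)) = F n w"
      using F_rec[OF up pj(1,2)] c by simp
    have IH: "S (w \<circ> tr j) = F n (w \<circ> tr j)"
      by (rule less.hyps[OF measure_step[OF l] up]) simp
    show ?thesis using eS eF IH by simp
  next
    case False
    then have "w = longest n" using no_asc_longest[OF less.prems] by (auto simp: asc_def)
    then show ?thesis using S F_longest unfolding schubert_family_def by simp
  qed
qed

lemma schubert_eq:
  assumes "w permutes {1..n}"
  shows "schubert n w = F n w"
  unfolding schubert_def
proof (rule the_equality)
  show "\<exists>S. schubert_family n S \<and> S w = F n w" using F_family by blast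
next
  fix p assume "\<exists>S. schubert_family n S \<and> S w = p"
  then show "p = F n w" using family_unique[OF _ assms] by blast
qed

definition rl_less :: "(nat \<Rightarrow>\<^sub>0 nat) \<Rightarrow> (nat \<Rightarrow>\<^sub>0 nat) \<Rightarrow> bool" where
  "rl_less c d \<longleftrightarrow> (\<exists>p. Poly_Mapping.lookup c p < Poly_Mapping.lookup d p \<and>
      (\<forall>k>p. Poly_Mapping.lookup c k = Poly_Mapping.lookup d k))"

definition rl_le :: "(nat \<Rightarrow>\<^sub>0 nat) \<Rightarrow> (nat \<Rightarrow>\<^sub>0 nat) \<Rightarrow> bool" where
  "rl_le c d \<longleftrightarrow> c = d \<or> rl_less c d"

lemma rl_irrefl: "\<not> rl_less c c"
  by (auto simp: rl_less_def)

lemma rl_trans: assumes "rl_less a b" "rl_less b c" shows "rl_less a c"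
proof -
  obtain p where p: "Poly_Mapping.lookup a p < Poly_Mapping.lookup b p" "\<forall>k>p. Poly_Mapping.lookup a k = Poly_Mapping.lookup b k"
    using assms(1) by (auto simp: rl_less_def)
  obtain q where q: "Poly_Mapping.lookup b q < Poly_Mapping.lookup c q" "\<forall>k>q. Poly_Mapping.lookup b k = Poly_Mapping.lookup c k"
    using assms(2) by (auto simp: rl_less_def)
  show ?thesis
  proof (cases "p < q")
    case True
    then show ?thesis unfolding rl_less_def using p q by (intro exI[of _ q]) auto
  next
    case False
    then have qp: "q \<le> p" by simp
    have "Poly_Mapping.lookup a p < Poly_Mapping.lookup c p"
    proof (cases "q = p")
      case True then show ?thesis using p q by simp
    next
      case False then have "q < p" using qp by simp
      then show ?thesis using p q by simp
    qed
    moreover have "\<forall>k>p. Poly_Mapping.lookup a k = Poly_Mapping.lookup c k" using p q qp by simp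
    ultimately show ?thesis unfolding rl_less_def by blast
  qed
qed

lemma rl_le_trans: "rl_le a b \<Longrightarrow> rl_le b c \<Longrightarrow> rl_le a c"
  unfolding rl_le_def using rl_trans by blast

lemma rl_le_less_trans: "rl_le a b \<Longrightarrow> rl_less b c \<Longrightarrow> rl_less a c"
  unfolding rl_le_def using rl_trans by blast

lemma rl_less_le_trans: "rl_less a b \<Longrightarrow> rl_le b c \<Longrightarrow> rl_less a c"
  unfolding rl_le_def using rl_trans by blast

lemma rl_antisym: "rl_le a b \<Longrightarrow> rl_le b a \<Longrightarrow> a = b"
  unfolding rl_le_def using rl_trans rl_irrefl by blast

lemma rl_add: "rl_less c d \<Longrightarrow> rl_less (c + e) (d + e)"
  unfolding rl_less_def by (auto simp: lookup_add)

lemma rl_le_add: "rl_le c d \<Longrightarrow> rl_le (c + e) (d + e)"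
  unfolding rl_le_def using rl_add by blast

lemma rl_le_add2: "rl_le c d \<Longrightarrow> rl_le (e + c) (e + d)"
  using rl_le_add[of c d e] by (simp add: add.commute)

definition Lead :: "mpoly \<Rightarrow> (nat \<Rightarrow>\<^sub>0 nat) \<Rightarrow> bool" where
  "Lead f a \<longleftrightarrow> Poly_Mapping.lookup f a \<noteq> 0 \<and> (\<forall>m\<in>Poly_Mapping.keys f. rl_le m a)"

lemma Lead_unique: "Lead f a \<Longrightarrow> Lead f b \<Longrightarrow> a = b"
  unfolding Lead_def by (meson in_keys_iff rl_antisym)

lemma sum_key_unique:
  assumes "Lead f a" "Lead g b" "x \<in> Poly_Mapping.keys f" "y \<in> Poly_Mapping.keys g" "x + y = a + b"
  shows "x = a \<and> y = b"
proof -
  have xa: "rl_le x a" and yb: "rl_le y b" using assms unfolding Lead_def by auto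
  have "x = a"
  proof (rule ccontr)
    assume "x \<noteq> a"
    then have "rl_less x a" using xa by (simp add: rl_le_def)
    then have "rl_less (x + y) (a + y)" by (rule rl_add)
    moreover have "rl_le (a + y) (a + b)" using rl_le_add2[OF yb] .
    ultimately have "rl_less (x + y) (a + b)" by (rule rl_less_le_trans)
    then show False using assms(5) rl_irrefl by simp
  qed
  then show ?thesis using assms(5) by simp
qed

lemma lookup_mult_expand:
  "Poly_Mapping.lookup (f * g) t = (\<Sum>x\<in>Poly_Mapping.keys f. \<Sum>y\<in>Poly_Mapping.keys g.
      if x + y = t then Poly_Mapping.lookup f x * Poly_Mapping.lookup g y else 0)"
proof -
  have "f * g = (\<Sum>x\<in>Poly_Mapping.keys f. \<Sum>y\<in>Poly_Mapping.keys g.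
      Poly_Mapping.single (x + y) (Poly_Mapping.lookup f x * Poly_Mapping.lookup g y))"
    by (subst (1) poly_expand[symmetric, of f], subst (1) poly_expand[symmetric, of g])
       (simp add: sum_product mult_single)
  then show ?thesis by (simp add: lookup_sum lookup_single when_def)
qed

lemma Lead_mult:
  assumes "Lead f a" "Lead g b"
  shows "Lead (f * g) (a + b) \<and> Poly_Mapping.lookup (f * g) (a + b) = Poly_Mapping.lookup f a * Poly_Mapping.lookup g b"
proof -
  have ak: "a \<in> Poly_Mapping.keys f" and bk: "b \<in> Poly_Mapping.keys g"
    using assms by (auto simp: Lead_def in_keys_iff)
  have "Poly_Mapping.lookup (f * g) (a + b) = (\<Sum>x\<in>Poly_Mapping.keys f. \<Sum>y\<in>Poly_Mapping.keys g.
      if x = a \<and> y = b then Poly_Mapping.lookup f x * Poly_Mapping.lookup g y else 0)"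
    unfolding lookup_mult_expand
    by (intro sum.cong refl) (use sum_key_unique[OF assms] in auto)
  also have "\<dots> = (\<Sum>x\<in>Poly_Mapping.keys f. if x = a then Poly_Mapping.lookup f x * Poly_Mapping.lookup g b else 0)"
  proof (rule sum.cong[OF refl])
    fix x
    show "(\<Sum>y\<in>Poly_Mapping.keys g. if x = a \<and> y = b then Poly_Mapping.lookup f x * Poly_Mapping.lookup g y else 0)
        = (if x = a then Poly_Mapping.lookup f x * Poly_Mapping.lookup g b else 0)"
      using bk by (cases "x = a") (simp_all add: sum.delta)
  qed
  also have "\<dots> = Poly_Mapping.lookup f a * Poly_Mapping.lookup g b"
    using ak by (simp add: sum.delta)
  finally have l: "Poly_Mapping.lookup (f * g) (a + b) = Poly_Mapping.lookup f a * Poly_Mapping.lookup g b" .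
  have k: "\<forall>m\<in>Poly_Mapping.keys (f * g). rl_le m (a + b)"
  proof
    fix m assume "m \<in> Poly_Mapping.keys (f * g)"
    then obtain x y where xy: "m = x + y" "x \<in> Poly_Mapping.keys f" "y \<in> Poly_Mapping.keys g"
      using keys_mult by blast
    have "rl_le (x + y) (a + y)" using assms(1) xy by (intro rl_le_add) (auto simp: Lead_def)
    moreover have "rl_le (a + y) (a + b)" using assms(2) xy by (intro rl_le_add2) (auto simp: Lead_def)
    ultimately show "rl_le m (a + b)" using xy rl_le_trans by blast
  qed
  show ?thesis using l k assms by (simp add: Lead_def)
qed

lemma Lead_one: "Lead 1 0"
  by (simp add: Lead_def rl_le_def)

lemma Lead_prod:
  assumes "finite K" "\<And>k. k \<in> K \<Longrightarrow> Lead (f k) (a k)"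
  shows "Lead (\<Prod>k\<in>K. f k) (\<Sum>k\<in>K. a k)"
  using assms
proof (induction K rule: finite_induct)
  case empty then show ?case by (simp add: Lead_one)
next
  case (insert x K)
  then show ?case using Lead_mult[of "f x" "a x" "prod f K" "sum a K"] by simp
qed

lemma lookup_of_int_mult: "Poly_Mapping.lookup (of_int a * (g::mpoly)) t = a * Poly_Mapping.lookup g t"
proof -
  have "of_int a * g = Poly_Mapping.map ((*) a) g"
    by (simp add: mult_map_scale_conv_mult single_of_int[symmetric] del: single_of_int)
  then show ?thesis by (simp add: Poly_Mapping.map.rep_eq when_def)
qed

lemma keys_of_int_mult: "Poly_Mapping.keys (of_int a * (g::mpoly)) \<subseteq> Poly_Mapping.keys g"
proof
  fix x assume "x \<in> Poly_Mapping.keys (of_int a * g)"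
  then have "Poly_Mapping.lookup (of_int a * g) x \<noteq> 0" unfolding in_keys_iff .
  then have "a * Poly_Mapping.lookup g x \<noteq> 0" by (simp add: lookup_of_int_mult)
  then show "x \<in> Poly_Mapping.keys g" unfolding in_keys_iff by (metis mult_zero_right)
qed

lemma keys_mon: "Poly_Mapping.keys (mon m) = {m}"
  by simp

lemma keys_Dm:
  assumes "c' \<in> Poly_Mapping.keys (Dm i c)"
  shows "\<exists>x y. c' = setm i c x y \<and> x + y + 1 = Poly_Mapping.lookup c i + Poly_Mapping.lookup c (Suc i)
     \<and> x < max (Poly_Mapping.lookup c i) (Poly_Mapping.lookup c (Suc i))
     \<and> y < max (Poly_Mapping.lookup c i) (Poly_Mapping.lookup c (Suc i))"
proof -
  define p where "p = Poly_Mapping.lookup c i"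
  define q where "q = Poly_Mapping.lookup c (Suc i)"
  show ?thesis
  proof (cases "q < p")
    case True
    then have "c' \<in> Poly_Mapping.keys (\<Sum>j<p-q. mon (setm i c (q + j) (p - Suc j)))"
      using assms unfolding Dm_def Let_def p_def[symmetric] q_def[symmetric] by simp
    then obtain j where j: "j < p - q" "c' = setm i c (q + j) (p - Suc j)"
      using keys_sum[of "\<lambda>j. mon (setm i c (q + j) (p - Suc j))" "{..<p-q}"] by auto
    have ar: "q + j + (p - Suc j) + 1 = p + q" "q + j < max p q" "p - Suc j < max p q"
      using j(1) True by auto
    show ?thesis unfolding p_def[symmetric] q_def[symmetric]
      by (rule exI[of _ "q + j"], rule exI[of _ "p - Suc j"]) (simp only: j(2) ar simp_thms)
  next
    case False
    show ?thesis
    proof (cases "p < q")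
      case True
      then have "c' \<in> Poly_Mapping.keys (\<Sum>j<q-p. mon (setm i c (p + j) (q - Suc j)))"
        using assms False unfolding Dm_def Let_def p_def[symmetric] q_def[symmetric] by simp
      then obtain j where j: "j < q - p" "c' = setm i c (p + j) (q - Suc j)"
        using keys_sum[of "\<lambda>j. mon (setm i c (p + j) (q - Suc j))" "{..<q-p}"] by auto
      have ar: "p + j + (q - Suc j) + 1 = p + q" "p + j < max p q" "q - Suc j < max p q"
        using j(1) True by auto
      show ?thesis unfolding p_def[symmetric] q_def[symmetric]
        by (rule exI[of _ "p + j"], rule exI[of _ "q - Suc j"]) (simp only: j(2) ar simp_thms)
    next
      case False2: False
      then have "Dm i c = 0" using False unfolding Dm_def Let_def p_def[symmetric] q_def[symmetric] by simp
      then show ?thesis using assms by simp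
    qed
  qed
qed

lemma lookup_Dm_top:
  assumes "Poly_Mapping.lookup c (Suc i) < Poly_Mapping.lookup c i"
  shows "Poly_Mapping.lookup (Dm i c) (setm i c (Poly_Mapping.lookup c (Suc i)) (Poly_Mapping.lookup c i - 1)) = 1"
proof -
  define p where "p = Poly_Mapping.lookup c i"
  define q where "q = Poly_Mapping.lookup c (Suc i)"
  define t where "t = setm i c q (p - 1)"
  have qp: "q < p" using assms by (simp add: p_def q_def)
  have D: "Dm i c = (\<Sum>j<p-q. mon (setm i c (q + j) (p - Suc j)))"
    using qp unfolding Dm_def Let_def p_def[symmetric] q_def[symmetric] by simp
  have tm: "Poly_Mapping.lookup (mon (setm i c (q + j) (p - Suc j))) t = (if j = 0 then 1 else 0)" for j
  proof (cases "j = 0")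
    case True then show ?thesis by (simp add: t_def)
  next
    case False
    have "setm i c (q + j) (p - Suc j) \<noteq> t"
    proof
      assume "setm i c (q + j) (p - Suc j) = t"
      then have "Poly_Mapping.lookup (setm i c (q + j) (p - Suc j)) i = Poly_Mapping.lookup t i" by simp
      then show False using False by (simp add: lookup_setm t_def)
    qed
    then show ?thesis using False by (simp add: lookup_single_not_eq)
  qed
  have "Poly_Mapping.lookup (Dm i c) t = (\<Sum>j<p-q. if j = 0 then 1 else 0)"
    unfolding D lookup_sum by (intro sum.cong refl) (rule tm)
  also have "\<dots> = 1" using qp by simp
  finally show ?thesis by (simp add: p_def q_def t_def)
qed

lemma keys_Dd:
  assumes "c' \<in> Poly_Mapping.keys (Dd i f)"
  shows "\<exists>c\<in>Poly_Mapping.keys f. c' \<in> Poly_Mapping.keys (Dm i c)"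
proof -
  have "c' \<in> (\<Union>c\<in>Poly_Mapping.keys f. Poly_Mapping.keys (of_int (Poly_Mapping.lookup f c) * Dm i c))"
  proof -
    have sub: "Poly_Mapping.keys (Dd i f) \<subseteq> (\<Union>c\<in>Poly_Mapping.keys f. Poly_Mapping.keys (of_int (Poly_Mapping.lookup f c) * Dm i c))"
      unfolding Dd_def by (rule keys_sum)
    show ?thesis by (rule subsetD[OF sub assms])
  qed
  then obtain c where "c \<in> Poly_Mapping.keys f" "c' \<in> Poly_Mapping.keys (of_int (Poly_Mapping.lookup f c) * Dm i c)"
    by blast
  then show ?thesis using keys_of_int_mult by blast
qed

lemma lookup_Dd: "Poly_Mapping.lookup (Dd i f) t = (\<Sum>c\<in>Poly_Mapping.keys f. Poly_Mapping.lookup f c * Poly_Mapping.lookup (Dm i c) t)"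
  unfolding Dd_def lookup_sum by (simp add: lookup_of_int_mult)

lemma step_top:
  assumes lt: "Poly_Mapping.lookup b (Suc r) < Poly_Mapping.lookup b r"
    and c': "c' = setm r b x y"
    and s: "x + y + 1 = Poly_Mapping.lookup b r + Poly_Mapping.lookup b (Suc r)"
    and ym: "y < max (Poly_Mapping.lookup b r) (Poly_Mapping.lookup b (Suc r))"
  shows "rl_le c' (setm r b (Poly_Mapping.lookup b (Suc r)) (Poly_Mapping.lookup b r - 1))"
proof (cases "y < Poly_Mapping.lookup b r - 1")
  case True
  have "Poly_Mapping.lookup c' (Suc r) < Poly_Mapping.lookup (setm r b (Poly_Mapping.lookup b (Suc r)) (Poly_Mapping.lookup b r - 1)) (Suc r)
     \<and> (\<forall>k>Suc r. Poly_Mapping.lookup c' k = Poly_Mapping.lookup (setm r b (Poly_Mapping.lookup b (Suc r)) (Poly_Mapping.lookup b r - 1)) k)"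
    using True by (simp add: c' lookup_setm)
  then have "rl_less c' (setm r b (Poly_Mapping.lookup b (Suc r)) (Poly_Mapping.lookup b r - 1))"
    unfolding rl_less_def by blast
  then show ?thesis by (simp add: rl_le_def)
next
  case False
  have m: "max (Poly_Mapping.lookup b r) (Poly_Mapping.lookup b (Suc r)) = Poly_Mapping.lookup b r"
    using lt by simp
  have y: "y = Poly_Mapping.lookup b r - 1" using False ym m by linarith
  have x: "x = Poly_Mapping.lookup b (Suc r)" using s y lt by linarith
  show ?thesis using c' x y by (simp add: rl_le_def)
qed

lemma step_less:
  fixes D :: "nat \<Rightarrow> nat"
  assumes less: "rl_less c b" and cD: "\<And>k. Poly_Mapping.lookup c k \<le> D k"
    and bD: "Poly_Mapping.lookup b r = D r"
    and bD2: "\<And>k. Suc (Suc r) \<le> k \<Longrightarrow> Poly_Mapping.lookup b k = D k"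
    and Dr: "Suc (D (Suc r)) = D r"
    and lt: "Poly_Mapping.lookup b (Suc r) < Poly_Mapping.lookup b r"
    and c': "c' = setm r c x y"
    and s: "x + y + 1 = Poly_Mapping.lookup c r + Poly_Mapping.lookup c (Suc r)"
    and ym: "y < max (Poly_Mapping.lookup c r) (Poly_Mapping.lookup c (Suc r))"
  shows "rl_less c' (setm r b (Poly_Mapping.lookup b (Suc r)) (Poly_Mapping.lookup b r - 1))"
proof -
  let ?c = "Poly_Mapping.lookup c" and ?b = "Poly_Mapping.lookup b"
  define a where "a = setm r b (?b (Suc r)) (?b r - 1)"
  have la: "Poly_Mapping.lookup a k = (if k = r then ?b (Suc r) else if k = Suc r then D r - 1 else ?b k)" for k
    by (simp add: a_def lookup_setm bD)
  have lc': "Poly_Mapping.lookup c' k = (if k = r then x else if k = Suc r then y else ?c k)" for k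
    by (simp add: c' lookup_setm)
  obtain p where p1: "?c p < ?b p" and p2: "\<And>k. p < k \<Longrightarrow> ?c k = ?b k"
    using less unfolding rl_less_def by blast
  show ?thesis
  proof (cases "Suc (Suc r) \<le> p")
    case True
    have "rl_less c' a" unfolding rl_less_def
      by (rule exI[of _ p]) (use True p1 p2 in \<open>auto simp: la lc'\<close>)
    then show ?thesis by (simp add: a_def)
  next
    case False
  then have pr: "p \<le> Suc r" by simp
  have mx: "max (?c r) (?c (Suc r)) \<le> D r" using cD[of r] cD[of "Suc r"] Dr by simp
  have "y < D r" using ym mx by (auto simp: max_def split: if_splits)
  then consider "y < D r - 1" | "y = D r - 1" by linarith
  then have "rl_less c' a"
  proof cases
    case 1
    show ?thesis unfolding rl_less_def
      by (rule exI[of _ "Suc r"]) (use 1 pr p2 in \<open>auto simp: la lc'\<close>)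
  next
    case 2
    have cr: "?c r = D r" using 2 ym mx cD[of "Suc r"] Dr by (simp add: max_def split: if_splits)
    have x: "x = ?c (Suc r)" using s 2 cr Dr by simp
    show ?thesis
    proof (cases "p = Suc r")
      case True
      show ?thesis unfolding rl_less_def
        by (rule exI[of _ r]) (use True p1 p2 x 2 in \<open>auto simp: la lc'\<close>)
    next
      case False
      have "p \<noteq> r" using p1 cr bD by auto
      then have pr': "p < r" using False pr by simp
      have "?c (Suc r) = ?b (Suc r)" using p2 pr' by simp
      show ?thesis unfolding rl_less_def
        by (rule exI[of _ p]) (use pr' p1 p2 x 2 \<open>?c (Suc r) = ?b (Suc r)\<close> in \<open>auto simp: la lc'\<close>)
    qed
  qed
  then show ?thesis by (simp add: a_def)
  qed
qed

lemma step_bound: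
  fixes D :: "nat \<Rightarrow> nat"
  assumes cD: "\<And>k. Poly_Mapping.lookup c k \<le> D k"
    and Dr: "Suc (D (Suc r)) = D r"
    and c': "c' = setm r c x y"
    and xm: "x < max (Poly_Mapping.lookup c r) (Poly_Mapping.lookup c (Suc r))"
    and ym: "y < max (Poly_Mapping.lookup c r) (Poly_Mapping.lookup c (Suc r))"
  shows "Poly_Mapping.lookup c' k \<le> D k"
proof -
  have mx: "max (Poly_Mapping.lookup c r) (Poly_Mapping.lookup c (Suc r)) \<le> D r"
    using cD[of r] cD[of "Suc r"] Dr by simp
  then have "x < D r" "y < D r" using xm ym by linarith+
  then have "x \<le> D r" "y \<le> D (Suc r)" using Dr by linarith+
  then show ?thesis using cD[of k] by (simp add: c' lookup_setm)
qed

definition dl :: "nat \<Rightarrow> nat \<Rightarrow> nat" where "dl n k = (if 1 \<le> k then n - k else 0)"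

definition Lpm :: "nat \<Rightarrow> (nat \<Rightarrow> nat) \<Rightarrow> (nat \<Rightarrow>\<^sub>0 nat)" where
  "Lpm n w = Abs_poly_mapping (lehmer n w)"

lemma lookup_Lpm: "Poly_Mapping.lookup (Lpm n w) = lehmer n w"
proof -
  have "finite {k. lehmer n w k \<noteq> 0}"
  proof (rule finite_subset[of _ "{..n}"])
    show "{k. lehmer n w k \<noteq> 0} \<subseteq> {..n}"
    proof
      fix k assume "k \<in> {k. lehmer n w k \<noteq> 0}"
      then show "k \<in> {..n}" using lehmer_big[of n k w] by (cases "n < k") auto
    qed
  qed simp
  then show ?thesis by (simp add: Lpm_def)
qed

definition SInv :: "nat \<Rightarrow> mpoly \<Rightarrow> (nat \<Rightarrow>\<^sub>0 nat) \<Rightarrow> bool" where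
  "SInv n f b \<longleftrightarrow> Poly_Mapping.lookup f b = 1 \<and> (\<forall>m\<in>Poly_Mapping.keys f. rl_le m b)
     \<and> (\<forall>m\<in>Poly_Mapping.keys f. \<forall>k. Poly_Mapping.lookup m k \<le> dl n k)"

lemma prod_mon: "finite A \<Longrightarrow> (\<Prod>i\<in>A. mon (g i)) = mon (\<Sum>i\<in>A. g i)"
  by (induction A rule: finite_induct) (simp_all add: mult_single)

lemma F_longest_mon: "F n (longest n) = mon (Lpm n (longest n))"
proof -
  have "F n (longest n) = (\<Prod>i\<in>{1..n}. mon (Poly_Mapping.single i (n - i)))"
    by (simp add: F_longest Var_pow)
  also have "\<dots> = mon (\<Sum>i\<in>{1..n}. Poly_Mapping.single i (n - i))" by (simp add: prod_mon)
  also have "(\<Sum>i\<in>{1..n}. Poly_Mapping.single i (n - i)) = Lpm n (longest n)"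
  proof (rule poly_mapping_eqI)
    fix k
    have "Poly_Mapping.lookup (\<Sum>i\<in>{1..n}. Poly_Mapping.single i (n - i)) k = (\<Sum>i\<in>{1..n}. if i = k then n - i else 0)"
      by (simp add: lookup_sum lookup_single when_def)
    also have "\<dots> = (if k \<in> {1..n} then n - k else 0)" by (simp add: sum.delta')
    also have "\<dots> = lehmer n (longest n) k" by (simp add: lehmer_longest)
    finally show "Poly_Mapping.lookup (\<Sum>i\<in>{1..n}. Poly_Mapping.single i (n - i)) k = Poly_Mapping.lookup (Lpm n (longest n)) k"
      by (simp add: lookup_Lpm)
  qed
  finally show ?thesis .
qed

lemma SInv_longest: "SInv n (mon (Lpm n (longest n))) (Lpm n (longest n))"
  unfolding SInv_def by (simp add: rl_le_def lookup_Lpm lehmer_longest dl_def)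

lemma F_SInv:
  assumes "w permutes {1..n}"
  shows "SInv n (F n w) (Lpm n w)"
  using assms
proof (induction "n * n - perm_length n w" arbitrary: w rule: less_induct)
  case less
  show ?case
  proof (cases "\<exists>j. asc n w j")
    case False
    then have "w = longest n" using no_asc_longest[OF less.prems] by (auto simp: asc_def)
    then show ?thesis using F_longest_mon SInv_longest by simp
  next
    case True
    define R where "R = {j. asc n w j}"
    have finR: "finite R" by (rule finite_subset[of _ "{..<n}"]) (auto simp: R_def asc_def)
    have neR: "R \<noteq> {}" using True by (simp add: R_def)
    define r where "r = Max R"
    have ar: "asc n w r" using Max_in[OF finR neR] by (simp add: r_def R_def)
    have gt: "\<not> asc n w k" if "r < k" for k
      using Max_ge[OF finR, of k] that by (auto simp: r_def R_def)
    have pr: "1 \<le> r" "r < n" "w r < w (Suc r)" using ar by (auto simp: asc_def)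
    define v where "v = w \<circ> tr r"
    have vp: "v permutes {1..n}" unfolding v_def by (rule perm_comp[OF less.prems pr(1,2)])
    have lv: "perm_length n v = perm_length n w + 1" unfolding v_def using perm_length_asc[OF pr] by simp
    have IH: "SInv n (F n v) (Lpm n v)" by (rule less.hyps[OF measure_step[OF lv] vp]) simp
    have Fw: "F n w = Dd r (F n v)" using F_Q[OF less.prems ar] by (simp add: v_def ddiff_eq)
    have dec: "w (Suc k) < w k" if "Suc r \<le> k" "k < n" for k
    proof -
      have "\<not> w k < w (Suc k)" using gt[of k] that pr by (simp add: asc_def)
      moreover have "w (Suc k) \<noteq> w k" using perm_neq[OF less.prems] by simp
      ultimately show ?thesis by simp
    qed
    have Lw: "lehmer n w k = n - k" if "Suc r \<le> k" "k \<le> n" for k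
      by (rule lehmer_dec[of "Suc r" n w k]) (use dec that in auto)
    have b_r: "lehmer n v r = n - r"
      using lehmer_tr_i[OF pr(2,3)] Lw[of "Suc r"] pr by (simp add: v_def)
    have b_r1: "lehmer n v (Suc r) = lehmer n w r"
      using lehmer_tr_Suc_i[OF pr(3)] by (simp add: v_def)
    have b_other: "lehmer n v k = lehmer n w k" if "k \<noteq> r" "k \<noteq> Suc r" for k
      using lehmer_tr_other[of r n k w] that pr by (simp add: v_def)
    have b_high: "lehmer n v k = dl n k" if "Suc (Suc r) \<le> k" for k
    proof (cases "k \<le> n")
      case True then show ?thesis using b_other[of k] Lw[of k] that by (simp add: dl_def)
    next
      case False then show ?thesis using lehmer_big[of n k v] that by (simp add: dl_def)
    qed
    have lt: "lehmer n w r < n - r"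
    proof -
      have "{j. r < j \<and> j \<le> n \<and> w j < w r} \<subseteq> {Suc (Suc r)..n}"
      proof
        fix j assume j: "j \<in> {j. r < j \<and> j \<le> n \<and> w j < w r}"
        then have "j \<noteq> Suc r" using pr(3) by auto
        then show "j \<in> {Suc (Suc r)..n}" using j by auto
      qed
      then have "lehmer n w r \<le> card {Suc (Suc r)..n}" unfolding lehmer_def by (rule card_mono[rotated]) simp
      then show ?thesis using pr by simp
    qed
    have Dr: "Suc (dl n (Suc r)) = dl n r" using pr by (simp add: dl_def)
    define b where "b = Lpm n v"
    define f where "f = F n v"
    have lb: "Poly_Mapping.lookup b = lehmer n v" by (simp add: b_def lookup_Lpm)
    have bD: "Poly_Mapping.lookup b r = dl n r" using b_r pr by (simp add: lb dl_def)
    have bD2: "\<And>k. Suc (Suc r) \<le> k \<Longrightarrow> Poly_Mapping.lookup b k = dl n k" using b_high by (simp add: lb)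
    have blt: "Poly_Mapping.lookup b (Suc r) < Poly_Mapping.lookup b r" using b_r b_r1 lt by (simp add: lb)
    define a where "a = setm r b (Poly_Mapping.lookup b (Suc r)) (Poly_Mapping.lookup b r - 1)"
    have alpha: "Lpm n w = a"
    proof (rule poly_mapping_eqI)
      fix k
      show "Poly_Mapping.lookup (Lpm n w) k = Poly_Mapping.lookup a k"
        using b_r b_r1 b_other[of k] Lw[of "Suc r"] pr
        by (auto simp: a_def lookup_setm lb lookup_Lpm)
    qed
    have l1: "Poly_Mapping.lookup f b = 1" and kf: "\<And>m. m \<in> Poly_Mapping.keys f \<Longrightarrow> rl_le m b"
      and bf: "\<And>m k. m \<in> Poly_Mapping.keys f \<Longrightarrow> Poly_Mapping.lookup m k \<le> dl n k"
      using IH by (auto simp: SInv_def b_def f_def)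
    have keysD: "rl_le c' a \<and> (\<forall>k. Poly_Mapping.lookup c' k \<le> dl n k)"
      if c: "c \<in> Poly_Mapping.keys f" and c': "c' \<in> Poly_Mapping.keys (Dm r c)" for c c'
    proof -
      obtain x y where xy: "c' = setm r c x y"
        "x + y + 1 = Poly_Mapping.lookup c r + Poly_Mapping.lookup c (Suc r)"
        "x < max (Poly_Mapping.lookup c r) (Poly_Mapping.lookup c (Suc r))"
        "y < max (Poly_Mapping.lookup c r) (Poly_Mapping.lookup c (Suc r))"
        using keys_Dm[OF c'] by blast
      have "rl_le c' a"
      proof (cases "c = b")
        case True
        show ?thesis unfolding a_def by (rule step_top[OF blt, of c' x y]) (use xy True in simp_all)
      next
        case False
        then have "rl_less c b" using kf[OF c] by (simp add: rl_le_def)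
        have "rl_less c' a" unfolding a_def
          by (rule step_less[OF \<open>rl_less c b\<close> bf[OF c] bD bD2 Dr blt xy(1,2,4)])
        then show ?thesis by (simp add: rl_le_def)
      qed
      moreover have "\<forall>k. Poly_Mapping.lookup c' k \<le> dl n k"
        using step_bound[OF bf[OF c] Dr xy(1,3,4)] by blast
      ultimately show ?thesis by blast
    qed
    have zero: "Poly_Mapping.lookup (Dm r c) a = 0" if c: "c \<in> Poly_Mapping.keys f" "c \<noteq> b" for c
    proof (rule ccontr)
      assume "Poly_Mapping.lookup (Dm r c) a \<noteq> 0"
      then have ak: "a \<in> Poly_Mapping.keys (Dm r c)" by (simp add: in_keys_iff)
      obtain x y where xy: "a = setm r c x y"
        "x + y + 1 = Poly_Mapping.lookup c r + Poly_Mapping.lookup c (Suc r)"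
        "x < max (Poly_Mapping.lookup c r) (Poly_Mapping.lookup c (Suc r))"
        "y < max (Poly_Mapping.lookup c r) (Poly_Mapping.lookup c (Suc r))"
        using keys_Dm[OF ak] by blast
      have "rl_less c b" using kf[OF c(1)] c(2) by (simp add: rl_le_def)
      have "rl_less a a" unfolding a_def[symmetric]
        by (rule step_less[OF \<open>rl_less c b\<close> bf[OF c(1)] bD bD2 Dr blt xy(1,2,4), folded a_def])
      then show False using rl_irrefl by blast
    qed
    have bk: "b \<in> Poly_Mapping.keys f" using l1 by (simp add: in_keys_iff)
    have top: "Poly_Mapping.lookup (Dm r b) a = 1" unfolding a_def by (rule lookup_Dm_top[OF blt])
    have "Poly_Mapping.lookup (Dd r f) a = (\<Sum>c\<in>Poly_Mapping.keys f. Poly_Mapping.lookup f c * Poly_Mapping.lookup (Dm r c) a)"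
      by (rule lookup_Dd)
    also have "\<dots> = (\<Sum>c\<in>Poly_Mapping.keys f. if c = b then 1 else 0)"
    proof (rule sum.cong[OF refl])
      fix c assume "c \<in> Poly_Mapping.keys f"
      then show "Poly_Mapping.lookup f c * Poly_Mapping.lookup (Dm r c) a = (if c = b then 1 else 0)"
        using zero[of c] l1 top by auto
    qed
    also have "\<dots> = 1" using bk by simp
    finally have la: "Poly_Mapping.lookup (Dd r f) a = 1" .
    have "SInv n (Dd r f) a"
      unfolding SInv_def using la keysD keys_Dd by blast
    then show ?thesis using Fw alpha by (simp add: f_def)
  qed
qed

definition ind :: "nat set \<Rightarrow> (nat \<Rightarrow>\<^sub>0 nat)" where
  "ind T = (\<Sum>t\<in>T. Poly_Mapping.single t 1)"

lemma lookup_ind: "finite T \<Longrightarrow> Poly_Mapping.lookup (ind T) x = (if x \<in> T then 1 else 0)"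
proof -
  assume fT: "finite T"
  then show ?thesis by (simp add: ind_def lookup_sum lookup_single when_def sum.delta)
qed

lemma ind_inj:
  assumes "finite T" "finite T'" "ind T = ind T'"
  shows "T = T'"
proof (rule set_eqI)
  fix x
  have "Poly_Mapping.lookup (ind T) x = Poly_Mapping.lookup (ind T') x" using assms(3) by simp
  then show "x \<in> T \<longleftrightarrow> x \<in> T'" using assms(1,2) by (simp add: lookup_ind split: if_splits)
qed

lemma prod_Var: "finite T \<Longrightarrow> (\<Prod>t\<in>T. Var t) = mon (ind T)"
  unfolding Var_def ind_def by (rule prod_mon)

lemma elem_alt: "elem k j = (\<Sum>T\<in>{T. T \<subseteq> {1..k} \<and> card T = j}. mon (ind T))"
  unfolding elem_def
proof (rule sum.cong[OF refl])
  fix T assume "T \<in> {T. T \<subseteq> {1..k} \<and> card T = j}"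
  then have "finite T" by (auto intro: finite_subset)
  then show "(\<Prod>t\<in>T. Var t) = mon (ind T)" by (rule prod_Var)
qed

lemma elem_zero:
  assumes "k < j"
  shows "elem k j = 0"
proof -
  have "{T. T \<subseteq> {1..k} \<and> card T = j} = {}"
  proof (rule ccontr)
    assume "{T. T \<subseteq> {1..k} \<and> card T = j} \<noteq> {}"
    then obtain T where "T \<subseteq> {1..k}" "card T = j" by blast
    then have "j \<le> card {1..k}" by (metis card_mono finite_atLeastAtMost)
    then show False using assms by simp
  qed
  then show ?thesis unfolding elem_def by (simp only: sum.empty)
qed

lemma ind_le:
  assumes T: "T \<subseteq> {1..k}" "card T = j" and jk: "j \<le> k"
  shows "rl_le (ind T) (ind {Suc k - j..k})"
proof (cases "T = {Suc k - j..k}")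
  case True then show ?thesis by (simp add: rl_le_def)
next
  case False
  define T0 where "T0 = {Suc k - j..k}"
  have fT: "finite T" using T(1) by (auto intro: finite_subset)
  have fT0: "finite T0" by (simp add: T0_def)
  define Dl where "Dl = (T - T0) \<union> (T0 - T)"
  have fD: "finite Dl" using fT fT0 by (simp add: Dl_def)
  have neD: "Dl \<noteq> {}" using False by (auto simp: Dl_def T0_def)
  define p where "p = Max Dl"
  have pD: "p \<in> Dl" using Max_in[OF fD neD] by (simp add: p_def)
  have above: "x \<in> T \<longleftrightarrow> x \<in> T0" if "p < x" for x
  proof -
    have "x \<notin> Dl" using Max_ge[OF fD, of x] that by (auto simp: p_def)
    then show ?thesis by (auto simp: Dl_def)
  qed
  have pin: "p \<in> T0 - T"
  proof (rule ccontr)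
    assume "p \<notin> T0 - T"
    then have pT: "p \<in> T" "p \<notin> T0" using pD by (auto simp: Dl_def)
    have "p \<le> k" using pT T(1) by auto
    then have pl: "p < Suc k - j" using pT(2) by (auto simp: T0_def)
    have "T0 \<subseteq> T"
    proof
      fix t assume t: "t \<in> T0"
      then have "p < t" using pl by (auto simp: T0_def)
      then show "t \<in> T" using above t by blast
    qed
    then have "insert p T0 \<subseteq> T" using pT by blast
    then have "card (insert p T0) \<le> card T" using fT by (rule card_mono[rotated])
    moreover have "card (insert p T0) = Suc j" using pT(2) fT0 jk by (simp add: T0_def)
    ultimately show False using T(2) by simp
  qed
  have "rl_less (ind T) (ind T0)"
    unfolding rl_less_def
  proof (intro exI conjI allI impI)
    show "Poly_Mapping.lookup (ind T) p < Poly_Mapping.lookup (ind T0) p"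
      using pin fT fT0 by (simp add: lookup_ind)
  next
    fix x assume "p < x"
    then show "Poly_Mapping.lookup (ind T) x = Poly_Mapping.lookup (ind T0) x"
      using above[of x] fT fT0 by (simp add: lookup_ind)
  qed
  then show ?thesis by (simp add: rl_le_def T0_def)
qed

lemma Lead_elem:
  assumes jk: "j \<le> k"
  shows "Lead (elem k j) (ind {Suc k - j..k})"
proof -
  define TT where "TT = {T. T \<subseteq> {1..k} \<and> card T = j}"
  define T0 where "T0 = {Suc k - j..k}"
  have fTT: "finite TT" by (rule finite_subset[of _ "Pow {1..k}"]) (auto simp: TT_def)
  have T0in: "T0 \<in> TT" using jk by (auto simp: TT_def T0_def)
  have fin: "finite T" if "T \<in> TT" for T using that by (auto simp: TT_def intro: finite_subset)
  have "Poly_Mapping.lookup (elem k j) (ind T0) = (\<Sum>T\<in>TT. Poly_Mapping.lookup (mon (ind T)) (ind T0))"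
    by (simp add: elem_alt lookup_sum TT_def)
  also have "\<dots> = (\<Sum>T\<in>TT. if T = T0 then 1 else 0)"
  proof (rule sum.cong[OF refl])
    fix T assume T: "T \<in> TT"
    have e1: "ind T = ind T0 \<longleftrightarrow> T = T0" using ind_inj[OF fin[OF T] fin[OF T0in]] by blast
    have e2: "ind T0 = ind T \<longleftrightarrow> T = T0" using e1 by auto
    show "Poly_Mapping.lookup (mon (ind T)) (ind T0) = (if T = T0 then 1 else 0)"
      by (simp add: lookup_single when_def e1 e2)
  qed
  also have "\<dots> = 1" using fTT T0in by simp
  finally have l: "Poly_Mapping.lookup (elem k j) (ind T0) = 1" .
  have k: "rl_le m (ind T0)" if m: "m \<in> Poly_Mapping.keys (elem k j)" for m
  proof -
    have sub: "Poly_Mapping.keys (elem k j) \<subseteq> (\<Union>T\<in>TT. Poly_Mapping.keys (mon (ind T)))"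
      unfolding elem_alt TT_def[symmetric] by (rule keys_sum)
    obtain T where T: "T \<in> TT" "m \<in> Poly_Mapping.keys (mon (ind T))" using subsetD[OF sub m] by blast
    then have "m = ind T" by simp
    then show ?thesis using ind_le[of T k j] T(1) jk by (simp add: TT_def T0_def)
  qed
  show ?thesis using l k by (simp add: Lead_def T0_def)
qed

lemma count_bound:
  fixes A :: "nat set" and a :: "nat \<Rightarrow> nat"
  assumes "finite A"
  shows "(\<Sum>k\<in>A. if i \<in> {Suc k - a k..k} then 1 else 0) \<le> (\<Sum>k\<in>A. if Suc i \<in> {Suc k - a k..k} then 1 else 0) + (1::nat)"
proof -
  have "(\<Sum>k\<in>A. if i \<in> {Suc k - a k..k} then 1 else 0)
      \<le> (\<Sum>k\<in>A. (if Suc i \<in> {Suc k - a k..k} then 1 else 0) + (if k = i then 1 else (0::nat)))"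
  proof (rule sum_mono)
    fix k assume "k \<in> A"
    show "(if i \<in> {Suc k - a k..k} then 1 else 0) \<le> (if Suc i \<in> {Suc k - a k..k} then 1 else 0) + (if k = i then 1 else (0::nat))"
      by auto
  qed
  also have "\<dots> = (\<Sum>k\<in>A. if Suc i \<in> {Suc k - a k..k} then 1 else 0) + (\<Sum>k\<in>A. if k = i then 1 else (0::nat))"
    by (rule sum.distrib)
  also have "(\<Sum>k\<in>A. if k = i then 1 else (0::nat)) \<le> 1" using assms by (simp add: sum.delta)
  finally show ?thesis by simp
qed

theorem lemma14:
  fixes n :: nat and w :: "nat \<Rightarrow> nat" and i :: nat
  assumes "w permutes {1..n}"
    and "1 \<le> i" and "i < n"
    and "lehmer n w i \<ge> lehmer n w (Suc i) + 2"
  shows "\<not> std_elem_monomial (schubert n w)"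
proof
  assume "std_elem_monomial (schubert n w)"
  then obtain a :: "nat \<Rightarrow> nat" and K where P: "schubert n w = (\<Prod>k\<in>{1..K}. elem k (a k))"
    unfolding std_elem_monomial_def by blast
  have SF: "schubert n w = F n w" by (rule schubert_eq[OF assms(1)])
  have SI: "SInv n (F n w) (Lpm n w)" by (rule F_SInv[OF assms(1)])
  have LS: "Lead (F n w) (Lpm n w)" using SI by (simp add: SInv_def Lead_def)
  have ak: "a k \<le> k" if "k \<in> {1..K}" for k
  proof (rule ccontr)
    assume "\<not> a k \<le> k"
    then have "elem k (a k) = 0" by (intro elem_zero) simp
    then have "(\<Prod>k\<in>{1..K}. elem k (a k)) = 0" using that by (intro prod_zero) auto
    then have "F n w = 0" using P SF by simp
    then show False using SI by (simp add: SInv_def)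
  qed
  define T where "T = (\<lambda>k. {Suc k - a k..k})"
  have LP: "Lead (\<Prod>k\<in>{1..K}. elem k (a k)) (\<Sum>k\<in>{1..K}. ind (T k))"
    by (rule Lead_prod) (use ak in \<open>auto simp: T_def intro: Lead_elem\<close>)
  have eq: "Lpm n w = (\<Sum>k\<in>{1..K}. ind (T k))"
    using Lead_unique[OF LS] LP P SF by simp
  have lk: "lehmer n w x = (\<Sum>k\<in>{1..K}. if x \<in> {Suc k - a k..k} then 1 else 0)" for x
  proof -
    have "lehmer n w x = Poly_Mapping.lookup (\<Sum>k\<in>{1..K}. ind (T k)) x"
      using eq by (simp add: lookup_Lpm[symmetric])
    also have "\<dots> = (\<Sum>k\<in>{1..K}. if x \<in> {Suc k - a k..k} then 1 else 0)"
      by (simp add: lookup_sum lookup_ind T_def)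
    finally show ?thesis .
  qed
  have "lehmer n w i \<le> lehmer n w (Suc i) + 1"
    unfolding lk by (rule count_bound) simp
  then show False using assms(4) by simp
qed

end
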